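(* The set $\{[A]\in\mathrm{MALG}: \text{there is no } D\in\boldsymbol{\Delta}^0_2 \text{ with } \mu(A\,\triangle\, D)=0\}$ is comeager in $\mathrm{MALG}$.
   Context: $2^\omega$ is the Cantor space; $\mu$ is the coin-tossing measure ($\mu(N_s)=2^{-\mathrm{lh}(s)}$, $N_s=\{x:s\subset x\}$). $\mathrm{MALG}$ is the measure algebra: the set of equivalence classes $[A]$ of $\mu$-measurable subsets of $2^\omega$ under $A\equiv B\iff\mu(A\triangle B)=0$, endowed with the complete separable metric $\delta([A],[B])=\mu(A\triangle B)$, which makes it a Polish space. $\boldsymbol{\Delta}^0_2$ is the class of sets that are simultaneously $F_\sigma$ and $G_\delta$. *)

theory Defs
  imports "HOL-Analysis.Analysis" "HOL-Probability.Probability"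
begin

text \<open>Cantor space is modelled as the type nat => bool with the product topology
(library instance), whose topology is the term euclidean.\<close>

definition coin :: "(nat \<Rightarrow> bool) measure" where
  "coin = PiM UNIV (\<lambda>_. measure_pmf (bernoulli_pmf (1/2)))"

definition mu :: "(nat \<Rightarrow> bool) measure" where
  "mu = completion coin"

definition symdiff :: "'a set \<Rightarrow> 'a set \<Rightarrow> 'a set" where
  "symdiff A B = (A - B) \<union> (B - A)"

definition malg_class :: "(nat \<Rightarrow> bool) set \<Rightarrow> (nat \<Rightarrow> bool) set set" where
  "malg_class A = {B \<in> sets mu. measure mu (symdiff A B) = 0}"

definition MALG :: "(nat \<Rightarrow> bool) set set set" where
  "MALG = malg_class ` sets mu"

definition malg_dist :: "(nat \<Rightarrow> bool) set set \<Rightarrow> (nat \<Rightarrow> bool) set set \<Rightarrow> real" where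
  "malg_dist X Y = measure mu (symdiff (SOME A. A \<in> X) (SOME B. B \<in> Y))"

definition malg_topology :: "(nat \<Rightarrow> bool) set set topology" where
  "malg_topology = Metric_space.mtopology MALG malg_dist"

definition nowhere_dense_in :: "'a topology \<Rightarrow> 'a set \<Rightarrow> bool" where
  "nowhere_dense_in X N \<longleftrightarrow> N \<subseteq> topspace X \<and> X interior_of (X closure_of N) = {}"

definition meager_in :: "'a topology \<Rightarrow> 'a set \<Rightarrow> bool" where
  "meager_in X S \<longleftrightarrow> (\<exists>N :: nat \<Rightarrow> 'a set. (\<forall>n. nowhere_dense_in X (N n)) \<and> S \<subseteq> (\<Union>n. N n))"

definition comeager_in :: "'a topology \<Rightarrow> 'a set \<Rightarrow> bool" where
  "comeager_in X S \<longleftrightarrow> S \<subseteq> topspace X \<and> meager_in X (topspace X - S)"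

definition Delta02 :: "(nat \<Rightarrow> bool) set \<Rightarrow> bool" where
  "Delta02 D \<longleftrightarrow> fsigma_in euclidean D \<and> gdelta_in euclidean D"

end

theory Submission
  imports Defs
begin

definition cyl :: "bool list \<Rightarrow> (nat \<Rightarrow> bool) set" where
  "cyl l = {x. \<forall>i<length l. x i = l!i}"

lemma prob_coin: "prob_space coin"
  unfolding coin_def by (intro prob_space_PiM prob_space_measure_pmf)

lemma space_coin[simp]: "space coin = UNIV"
  unfolding coin_def by (simp add: space_PiM)

lemma cyl_emb: "cyl l = prod_emb UNIV (\<lambda>_. measure_pmf (bernoulli_pmf (1/2))) {..<length l} (PiE {..<length l} (\<lambda>i. {l!i}))"
  unfolding cyl_def by (rule set_eqI) (auto simp: prod_emb_iff restrict_PiE_iff Pi_iff)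

lemma cyl_sets[measurable]: "cyl l \<in> sets coin"
  unfolding cyl_emb coin_def by (intro sets_PiM_I) auto

lemma emeasure_cyl: "emeasure coin (cyl l) = ennreal ((1/2)^length l)"
proof -
  have "emeasure coin (cyl l) = (\<Prod>i\<in>{..<length l}. emeasure (measure_pmf (bernoulli_pmf (1/2))) {l!i})"
    unfolding cyl_emb coin_def by (intro emeasure_PiM_emb prob_space_measure_pmf) auto
  also have "\<dots> = (\<Prod>i\<in>{..<length l}. ennreal (1/2))"
    by (intro prod.cong refl) (simp add: emeasure_pmf_single)
  also have "\<dots> = ennreal ((1/2)^length l)"
    by (simp only: prod_constant card_lessThan) (rule ennreal_power, simp)
  finally show ?thesis .
qed

lemma prob_mu: "prob_space mu"
  unfolding mu_def using prob_coin by (rule prob_space.prob_space_completion)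

lemma measure_cyl: "measure mu (cyl l) = (1/2)^length l"
  unfolding mu_def using emeasure_cyl by (simp add: measure_def)

lemma cyl_mu[measurable]: "cyl l \<in> sets mu"
  unfolding mu_def by simp

lemma cyl_map: "cyl (map x [0..<n]) = {y. \<forall>i<n. y i = x i}"
  unfolding cyl_def by auto

lemma open_cyl:
  fixes U :: "(nat \<Rightarrow> bool) set"
  assumes "open U" "x \<in> U"
  shows "\<exists>n. cyl (map x [0..<n]) \<subseteq> U"
proof -
  have "openin (product_topology (\<lambda>_. euclidean) UNIV) U"
    using assms(1) by (simp add: euclidean_product_topology)
  from product_topology_open_contains_basis[OF this assms(2)]
  obtain X where X: "x \<in> PiE UNIV X" "finite {i. X i \<noteq> topspace (euclidean::bool topology)}"
    "PiE UNIV X \<subseteq> U" by auto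
  obtain n where n0: "{i. X i \<noteq> UNIV} \<subseteq> {..<n}"
    using X(2) finite_nat_bounded by auto
  hence n: "\<forall>i\<in>{i. X i \<noteq> UNIV}. i < n" by auto
  have "cyl (map x [0..<n]) \<subseteq> PiE UNIV X"
  proof
    fix y assume "y \<in> cyl (map x [0..<n])"
    hence "\<forall>i<n. y i = x i" by (simp add: cyl_map)
    hence "y i \<in> X i" for i
    proof (cases "i < n")
      case True thus ?thesis using X(1) \<open>\<forall>i<n. y i = x i\<close> by (auto simp: PiE_iff)
    next
      case False thus ?thesis using n by auto
    qed
    thus "y \<in> PiE UNIV X" by (simp add: PiE_iff)
  qed
  thus ?thesis using X(3) by blast
qed

lemma closed_sets_coin:
  fixes F :: "(nat \<Rightarrow> bool) set"
  assumes "closed F"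
  shows "F \<in> sets coin"
proof -
  have eq: "F = (\<Inter>n. \<Union>l\<in>{l. length l = n \<and> cyl l \<inter> F \<noteq> {}}. cyl l)"
  proof (intro equalityI subsetI)
    fix x assume "x \<in> F"
    show "x \<in> (\<Inter>n. \<Union>l\<in>{l. length l = n \<and> cyl l \<inter> F \<noteq> {}}. cyl l)"
    proof
      fix n
      have "x \<in> cyl (map x [0..<n])" by (simp add: cyl_map)
      thus "x \<in> (\<Union>l\<in>{l. length l = n \<and> cyl l \<inter> F \<noteq> {}}. cyl l)"
        using \<open>x \<in> F\<close> by (intro UN_I[of "map x [0..<n]"]) auto
    qed
  next
    fix x assume x: "x \<in> (\<Inter>n. \<Union>l\<in>{l. length l = n \<and> cyl l \<inter> F \<noteq> {}}. cyl l)"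
    show "x \<in> F"
    proof (rule ccontr)
      assume "x \<notin> F"
      then obtain n where n: "cyl (map x [0..<n]) \<subseteq> - F"
        using open_cyl[of "-F" x] assms by auto
      from x obtain l where l: "length l = n" "cyl l \<inter> F \<noteq> {}" "x \<in> cyl l" by blast
      have "l = map x [0..<n]"
        using l by (intro nth_equalityI) (auto simp: cyl_def)
      thus False using l n by auto
    qed
  qed
  have fin: "finite {l::bool list. length l = n \<and> cyl l \<inter> F \<noteq> {}}" for n
    by (rule finite_subset[OF _ finite_lists_length_eq[of "UNIV::bool set" n]]) auto
  have U: "(\<Union>l\<in>{l. length l = n \<and> cyl l \<inter> F \<noteq> {}}. cyl l) \<in> sets coin" for n
    by (intro sets.finite_UN fin cyl_sets)
  have R: "range (\<lambda>n. \<Union>l\<in>{l. length l = n \<and> cyl l \<inter> F \<noteq> {}}. cyl l) \<subseteq> sets coin"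
    using U by blast
  have X: "(\<Inter>n. \<Union>l\<in>{l. length l = n \<and> cyl l \<inter> F \<noteq> {}}. cyl l) \<in> sets coin"
    by (rule sets.countable_INT[OF R UNIV_not_empty])
  show ?thesis by (subst eq) (rule X)
qed

lemma compact_cantor: "compact_space (euclidean :: (nat \<Rightarrow> bool) topology)"
proof -
  have h: "compact_space (euclidean :: bool topology)"
    by (simp add: compact_space_def finite_imp_compact)
  have "compact_space (product_topology (\<lambda>_::nat. euclidean::bool topology) UNIV)"
    by (simp add: compact_space_product_topology h)
  thus ?thesis by (simp add: euclidean_product_topology)
qed

lemma regular_cantor: "regular_space (euclidean :: (nat \<Rightarrow> bool) topology)"
proof -
  have h: "regular_space (euclidean :: bool topology)"
    unfolding regular_space_def
  proof (intro allI impI)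
    fix C and a :: bool
    assume "closedin euclidean C \<and> a \<in> topspace euclidean - C"
    hence aC: "a \<notin> C" by simp
    show "\<exists>U V. openin euclidean U \<and> openin euclidean V \<and> a \<in> U \<and> C \<subseteq> V \<and> disjnt U V"
      apply (rule exI[of _ "{a}"], rule exI[of _ "C"])
      using aC by (simp add: discrete_topology_class.open_discrete disjnt_def)
  qed
  have "regular_space (product_topology (\<lambda>_::nat. euclidean::bool topology) UNIV)"
    by (simp add: regular_space_product_topology h)
  thus ?thesis by (simp add: euclidean_product_topology)
qed

lemma baire_cantor:
  assumes "countable G" "\<And>C. C \<in> G \<Longrightarrow> closed C" "\<Union>G = (UNIV :: (nat \<Rightarrow> bool) set)"
  shows "\<exists>C\<in>G. \<exists>l. cyl l \<subseteq> C"
proof (rule ccontr)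
  assume no: "\<not> ?thesis"
  have "euclidean interior_of \<Union>G = {}"
  proof (rule Baire_category_alt)
    show "completely_metrizable_space (euclidean :: (nat \<Rightarrow> bool) topology) \<or> locally_compact_space (euclidean :: (nat \<Rightarrow> bool) topology) \<and> regular_space (euclidean :: (nat \<Rightarrow> bool) topology)"
      using compact_cantor regular_cantor compact_imp_locally_compact_space by blast
    show "countable G" by fact
    fix T assume T: "T \<in> G"
    show "closedin euclidean T \<and> euclidean interior_of T = {}"
    proof
      show "closedin euclidean T" using assms(2)[OF T] by simp
      show "euclidean interior_of T = {}"
      proof (rule ccontr)
        assume "euclidean interior_of T \<noteq> {}"
        then obtain x where x: "x \<in> interior T" by auto
        then obtain n where "cyl (map x [0..<n]) \<subseteq> interior T"
          using open_cyl[of "interior T" x] by auto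
        thus False using no T interior_subset by blast
      qed
    qed
  qed
  thus False using assms(3) by simp
qed

interpretation P: prob_space mu by (rule prob_mu)

lemma symdiff_sets[measurable]: "A \<in> sets mu \<Longrightarrow> B \<in> sets mu \<Longrightarrow> symdiff A B \<in> sets mu"
  unfolding symdiff_def by auto

lemma symdiff_comm: "symdiff A B = symdiff B A"
  unfolding symdiff_def by auto

lemma symdiff_self[simp]: "symdiff A A = {}"
  unfolding symdiff_def by auto

lemma sub2: "A \<in> sets mu \<Longrightarrow> B \<in> sets mu \<Longrightarrow> measure mu (A \<union> B) \<le> measure mu A + measure mu B"
  by (rule measure_subadditive) (auto simp: P.emeasure_eq_measure)

lemma symdiff_tri:
  assumes "A \<in> sets mu" "B \<in> sets mu" "C \<in> sets mu"
  shows "measure mu (symdiff A C) \<le> measure mu (symdiff A B) + measure mu (symdiff B C)"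
proof -
  have "measure mu (symdiff A C) \<le> measure mu (symdiff A B \<union> symdiff B C)"
    by (rule P.finite_measure_mono) (use assms in \<open>auto simp: symdiff_def\<close>)
  also have "\<dots> \<le> measure mu (symdiff A B) + measure mu (symdiff B C)"
    by (rule sub2) (use assms in auto)
  finally show ?thesis .
qed

lemma class_self: "A \<in> sets mu \<Longrightarrow> A \<in> malg_class A"
  unfolding malg_class_def by simp

lemma class_eq_iff:
  assumes "A \<in> sets mu" "B \<in> sets mu"
  shows "malg_class A = malg_class B \<longleftrightarrow> measure mu (symdiff A B) = 0"
proof
  assume "malg_class A = malg_class B"
  hence "B \<in> malg_class A" using class_self[OF assms(2)] by simp
  thus "measure mu (symdiff A B) = 0" unfolding malg_class_def by simp
next
  assume h: "measure mu (symdiff A B) = 0"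
  have "C \<in> malg_class A \<longleftrightarrow> C \<in> malg_class B" for C
  proof (cases "C \<in> sets mu")
    case True
    have "measure mu (symdiff A C) \<le> 0 + measure mu (symdiff B C)"
      using symdiff_tri[OF assms(1,2) True] h by simp
    moreover have "measure mu (symdiff B C) \<le> 0 + measure mu (symdiff A C)"
      using symdiff_tri[OF assms(2,1) True] h by (simp add: symdiff_comm)
    ultimately show ?thesis unfolding malg_class_def
      by (auto intro: order.antisym)
  next
    case False thus ?thesis unfolding malg_class_def by simp
  qed
  thus "malg_class A = malg_class B" by blast
qed

definition rep :: "(nat \<Rightarrow> bool) set set \<Rightarrow> (nat \<Rightarrow> bool) set" where
  "rep c = (SOME A. A \<in> c)"

lemma rep:
  assumes "c \<in> MALG"
  shows "rep c \<in> sets mu" "c = malg_class (rep c)"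
proof -
  obtain A where A: "A \<in> sets mu" "c = malg_class A" using assms unfolding MALG_def by auto
  hence "rep c \<in> c" unfolding rep_def using class_self by (metis someI)
  hence r: "rep c \<in> sets mu" "measure mu (symdiff A (rep c)) = 0" using A unfolding malg_class_def by auto
  show "rep c \<in> sets mu" by (fact r(1))
  show "c = malg_class (rep c)" using A r class_eq_iff by simp
qed

lemma malg_dist_rep: "malg_dist c c' = measure mu (symdiff (rep c) (rep c'))"
  unfolding malg_dist_def rep_def by simp

lemma metric: "Metric_space MALG malg_dist"
proof
  fix x y z
  show "0 \<le> malg_dist x y" by (simp add: malg_dist_rep)
  show "malg_dist x y = malg_dist y x" by (simp add: malg_dist_rep symdiff_comm)
  assume x: "x \<in> MALG" and y: "y \<in> MALG"
  have "(malg_dist x y = 0) = (malg_class (rep x) = malg_class (rep y))"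
    using rep(1)[OF x] rep(1)[OF y] class_eq_iff[of "rep x" "rep y"] by (simp add: malg_dist_rep)
  also have "\<dots> = (x = y)" using rep(2)[OF x] rep(2)[OF y] by metis
  finally show "(malg_dist x y = 0) = (x = y)" .
  assume z: "z \<in> MALG"
  show "malg_dist x z \<le> malg_dist x y + malg_dist y z"
    using rep[OF x] rep[OF y] rep[OF z] by (simp add: malg_dist_rep symdiff_tri)
qed

interpretation Mt: Metric_space MALG malg_dist by (rule metric)

lemma topspace_malg: "topspace malg_topology = MALG"
  unfolding malg_topology_def by simp

lemma rep_class:
  assumes "A \<in> sets mu"
  shows "malg_class A \<in> MALG" "measure mu (symdiff A (rep (malg_class A))) = 0"
proof -
  show c: "malg_class A \<in> MALG" using assms unfolding MALG_def by auto
  have e: "malg_class A = malg_class (rep (malg_class A))" by (rule rep(2)[OF c])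
  show "measure mu (symdiff A (rep (malg_class A))) = 0"
    using class_eq_iff[OF assms rep(1)[OF c]] e by blast
qed

definition fcyl :: "bool list \<Rightarrow> (nat \<Rightarrow> bool) set set \<Rightarrow> real" where
  "fcyl l c = measure mu (rep c \<inter> cyl l)"

lemma lip1:
  assumes "A \<in> sets mu" "B \<in> sets mu" "N \<in> sets mu"
  shows "measure mu (A \<inter> N) \<le> measure mu (B \<inter> N) + measure mu (symdiff A B)"
proof -
  have s1: "B \<inter> N \<in> sets mu" using assms by blast
  have s2: "symdiff A B \<in> sets mu" by (rule symdiff_sets[OF assms(1,2)])
  have sub: "A \<inter> N \<subseteq> (B \<inter> N) \<union> symdiff A B" unfolding symdiff_def by blast
  have "measure mu (A \<inter> N) \<le> measure mu ((B \<inter> N) \<union> symdiff A B)"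
    by (rule P.finite_measure_mono[OF sub]) (use s1 s2 in blast)
  also have "\<dots> \<le> measure mu (B \<inter> N) + measure mu (symdiff A B)"
    by (rule sub2[OF s1 s2])
  finally show ?thesis .
qed

lemma lip:
  assumes "A \<in> sets mu" "B \<in> sets mu" "N \<in> sets mu"
  shows "\<bar>measure mu (A \<inter> N) - measure mu (B \<inter> N)\<bar> \<le> measure mu (symdiff A B)"
  using lip1[OF assms(1,2,3)] lip1[OF assms(2,1,3)] by (simp add: symdiff_comm abs_le_iff)

definition U :: "bool list \<Rightarrow> (nat \<Rightarrow> bool) set set set" where
  "U l = {c \<in> MALG. 0 < fcyl l c \<and> fcyl l c < measure mu (cyl l)}"

lemma U_open: "openin malg_topology (U l)"
  unfolding malg_topology_def Mt.openin_mtopology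
proof (intro conjI allI impI)
  show "U l \<subseteq> MALG" unfolding U_def by blast
  fix c assume c: "c \<in> U l"
  have cM: "c \<in> MALG" and f1: "0 < fcyl l c" and f2: "fcyl l c < measure mu (cyl l)"
    using c unfolding U_def by blast+
  define e where "e = min (fcyl l c) (measure mu (cyl l) - fcyl l c)"
  have "e > 0" using f1 f2 unfolding e_def by simp
  moreover have "Mt.mball c e \<subseteq> U l"
  proof
    fix c' assume "c' \<in> Mt.mball c e"
    hence c': "c' \<in> MALG" "malg_dist c c' < e" by auto
    have "\<bar>fcyl l c - fcyl l c'\<bar> \<le> malg_dist c c'"
      unfolding fcyl_def malg_dist_rep by (intro lip rep(1) c'(1) cM cyl_mu)
    hence "0 < fcyl l c' \<and> fcyl l c' < measure mu (cyl l)"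
      using c'(2) unfolding e_def by linarith
    thus "c' \<in> U l" using c'(1) unfolding U_def by blast
  qed
  ultimately show "\<exists>r>0. Mt.mball c r \<subseteq> U l" by blast
qed

lemma cyl_ext: "cyl (l @ t) \<subseteq> cyl l"
  unfolding cyl_def by (auto simp: nth_append)

lemma dense_U:
  assumes cM: "c \<in> MALG" and e: "0 < e"
  shows "\<exists>c'\<in>U l. malg_dist c c' < e"
proof (cases "c \<in> U l")
  case True
  thus ?thesis using cM e by (intro bexI[of _ c]) auto
next
  case False
  define A where "A = rep c"
  have A: "A \<in> sets mu" unfolding A_def by (rule rep(1)[OF cM])
  define f where "f = measure mu (A \<inter> cyl l)"
  have f0: "0 \<le> f" unfolding f_def by simp
  have f1: "f \<le> measure mu (cyl l)" unfolding f_def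
    by (rule P.finite_measure_mono) auto
  have fc: "f = 0 \<or> f = measure mu (cyl l)"
    using False cM f0 f1 unfolding U_def fcyl_def f_def A_def by auto
  obtain k where k: "(1/2::real)^k < e" using real_arch_pow_inv[OF e, of "1/2"] by auto
  define t where "t = l @ replicate (Suc k) True"
  have tl: "cyl t \<subseteq> cyl l" unfolding t_def by (rule cyl_ext)
  have mt: "measure mu (cyl t) = (1/2)^(length l + Suc k)" unfolding t_def measure_cyl by simp
  have mt0: "0 < measure mu (cyl t)" unfolding mt by simp
  have mtl: "measure mu (cyl t) < measure mu (cyl l)" unfolding mt measure_cyl
    by (rule power_strict_decreasing) (auto simp: t_def)
  have "measure mu (cyl t) \<le> (1/2)^k" unfolding mt
    by (rule power_decreasing) auto
  hence mte: "measure mu (cyl t) < e" using k by linarith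
  define A' where "A' = (if f = 0 then A \<union> cyl t else A - cyl t)"
  have A': "A' \<in> sets mu" unfolding A'_def using A by auto
  have sd: "symdiff A A' \<subseteq> cyl t" unfolding A'_def symdiff_def by auto
  have dAA': "measure mu (symdiff A A') < e"
    using P.finite_measure_mono[OF sd cyl_mu] mte by linarith
  have g: "0 < measure mu (A' \<inter> cyl l) \<and> measure mu (A' \<inter> cyl l) < measure mu (cyl l)"
  proof (cases "f = 0")
    case True
    have eq: "A' \<inter> cyl l = (A \<inter> cyl l) \<union> cyl t" unfolding A'_def using True tl by auto
    have "measure mu (cyl t) \<le> measure mu (A' \<inter> cyl l)"
      unfolding eq by (rule P.finite_measure_mono) (use A in auto)
    moreover have "measure mu (A' \<inter> cyl l) \<le> f + measure mu (cyl t)"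
      unfolding eq f_def by (rule sub2) (use A in auto)
    ultimately show ?thesis using mt0 mtl True by linarith
  next
    case False
    hence ff: "f = measure mu (cyl l)" using fc by simp
    have eq: "A' \<inter> cyl l = (A \<inter> cyl l) - cyl t" unfolding A'_def using False by auto
    have "f \<le> measure mu (((A \<inter> cyl l) - cyl t) \<union> cyl t)"
      unfolding f_def by (rule P.finite_measure_mono) (use A in auto)
    also have "\<dots> \<le> measure mu ((A \<inter> cyl l) - cyl t) + measure mu (cyl t)"
      by (rule sub2) (use A in auto)
    finally have lo: "f \<le> measure mu (A' \<inter> cyl l) + measure mu (cyl t)" unfolding eq .
    have "measure mu (A' \<inter> cyl l) \<le> measure mu (cyl l - cyl t)"
      unfolding eq by (rule P.finite_measure_mono) auto
    also have "\<dots> = measure mu (cyl l) - measure mu (cyl t)"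
      by (rule P.finite_measure_Diff) (use tl in auto)
    finally have hi: "measure mu (A' \<inter> cyl l) \<le> measure mu (cyl l) - measure mu (cyl t)" .
    show ?thesis using lo hi ff mtl mt0 by linarith
  qed
  define c' where "c' = malg_class A'"
  have c'M: "c' \<in> MALG" and z: "measure mu (symdiff A' (rep c')) = 0"
    unfolding c'_def using rep_class[OF A'] by auto
  have "\<bar>measure mu (A' \<inter> cyl l) - fcyl l c'\<bar> \<le> 0"
    unfolding fcyl_def using lip[OF A' rep(1)[OF c'M] cyl_mu] z by simp
  hence "fcyl l c' = measure mu (A' \<inter> cyl l)" by simp
  hence c'U: "c' \<in> U l" using g c'M unfolding U_def by simp
  have "malg_dist c c' \<le> measure mu (symdiff A A') + measure mu (symdiff A' (rep c'))"
    unfolding malg_dist_rep A_def[symmetric] by (rule symdiff_tri[OF A A' rep(1)[OF c'M]])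
  hence "malg_dist c c' < e" using z dAA' by linarith
  thus ?thesis using c'U by blast
qed

lemma nowhere_U: "nowhere_dense_in malg_topology (MALG - U l)"
  unfolding nowhere_dense_in_def
proof (intro conjI)
  show "MALG - U l \<subseteq> topspace malg_topology" by (simp add: topspace_malg)
  have cl: "closedin malg_topology (MALG - U l)"
    using closedin_diff[OF closedin_topspace U_open] by (simp add: topspace_malg)
  show "malg_topology interior_of (malg_topology closure_of (MALG - U l)) = {}"
  proof (rule ccontr)
    assume "malg_topology interior_of (malg_topology closure_of (MALG - U l)) \<noteq> {}"
    then obtain x where x: "x \<in> malg_topology interior_of (MALG - U l)"
      using closure_of_closedin[OF cl] by auto
    have op: "openin malg_topology (malg_topology interior_of (MALG - U l))" by simp
    from x op obtain r where r: "r > 0" "Mt.mball x r \<subseteq> malg_topology interior_of (MALG - U l)"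
      unfolding malg_topology_def Mt.openin_mtopology by blast
    have "x \<in> MALG - U l" by (rule subsetD[OF interior_of_subset x])
    hence xM: "x \<in> MALG" by simp
    obtain c' where c': "c' \<in> U l" "malg_dist x c' < r" using dense_U[OF xM r(1)] by blast
    have "c' \<in> MALG" using c' unfolding U_def by blast
    hence "c' \<in> Mt.mball x r" using xM c' by simp
    hence "c' \<in> malg_topology interior_of (MALG - U l)" using r(2) by (rule subsetD[rotated])
    hence "c' \<in> MALG - U l" by (rule subsetD[OF interior_of_subset])
    thus False using c' by blast
  qed
qed

lemma bad:
  assumes cM: "c \<in> MALG" and Ac: "A \<in> c" and D: "Delta02 D" and z: "measure mu (symdiff A D) = 0"
  shows "\<exists>l. c \<notin> U l"
proof -
  define B where "B = rep c"
  have B: "B \<in> sets mu" unfolding B_def by (rule rep(1)[OF cM])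
  have "A \<in> malg_class B" using Ac rep(2)[OF cM] unfolding B_def by simp
  hence A: "A \<in> sets mu" and zBA: "measure mu (symdiff B A) = 0" unfolding malg_class_def by auto
  have D1: "(countable union_of closedin euclidean) D" and D2: "((countable intersection_of openin euclidean) relative_to topspace euclidean) D"
    using D unfolding Delta02_def fsigma_in_def gdelta_in_def by auto
  obtain UU where UU0: "countable UU" "UU \<subseteq> Collect (closedin euclidean)" "\<Union>UU = D"
    using D1 unfolding union_of_def by blast
  have UU: "countable UU" "\<And>C. C \<in> UU \<Longrightarrow> closed C" "\<Union>UU = D"
    using UU0 by auto
  obtain S where S: "(countable intersection_of openin euclidean) S" "topspace euclidean \<inter> S = D"
    using D2 unfolding relative_to_def by blast
  obtain VV where VV0: "countable VV" "VV \<subseteq> Collect (openin euclidean)" "\<Inter>VV = S"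
    using S(1) unfolding intersection_of_def by blast
  have VV: "countable VV" "\<And>V. V \<in> VV \<Longrightarrow> open V" "\<Inter>VV = D"
    using VV0 S(2) by auto
  have "D \<in> sets coin"
    unfolding UU(3)[symmetric] by (rule sets.countable_Union[OF UU(1)]) (use UU(2) closed_sets_coin in blast)
  hence Dm: "D \<in> sets mu" unfolding mu_def by simp
  have zBD: "measure mu (symdiff B D) = 0"
    using symdiff_tri[OF B A Dm] zBA z measure_nonneg[of mu "symdiff B D"] by linarith
  define G where "G = UU \<union> uminus ` VV"
  have "countable G" unfolding G_def using UU(1) VV(1) by simp
  moreover have "\<And>C. C \<in> G \<Longrightarrow> closed C" unfolding G_def using UU(2) VV(2) by auto
  moreover have "\<Union>G = UNIV"
  proof -
    have "x \<in> \<Union>G" for x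
    proof (cases "x \<in> D")
      case True thus ?thesis using UU(3) unfolding G_def by auto
    next
      case False
      then obtain V where "V \<in> VV" "x \<notin> V" using VV(3) by auto
      thus ?thesis unfolding G_def by auto
    qed
    thus ?thesis by auto
  qed
  ultimately obtain C l where C: "C \<in> G" "cyl l \<subseteq> C" using baire_cantor by meson
  show ?thesis
  proof (cases "C \<in> UU")
    case True
    hence sub: "cyl l \<subseteq> D" using C UU(3) by auto
    have "measure mu (D \<inter> cyl l) \<le> measure mu (B \<inter> cyl l) + measure mu (symdiff D B)"
      by (rule lip1[OF Dm B cyl_mu])
    moreover have "D \<inter> cyl l = cyl l" using sub by auto
    ultimately have "measure mu (cyl l) \<le> fcyl l c"
      using zBD unfolding fcyl_def B_def by (simp add: symdiff_comm)
    hence "c \<notin> U l" unfolding U_def by auto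
    thus ?thesis by blast
  next
    case False
    then obtain V where V: "V \<in> VV" "C = - V" using C(1) unfolding G_def by auto
    have "D \<subseteq> V" using VV(3) V(1) by auto
    hence sub: "D \<inter> cyl l = {}" using C(2) V(2) by auto
    have "measure mu (B \<inter> cyl l) \<le> measure mu (D \<inter> cyl l) + measure mu (symdiff B D)"
      by (rule lip1[OF B Dm cyl_mu])
    hence "fcyl l c \<le> 0" using zBD sub unfolding fcyl_def B_def by simp
    hence "c \<notin> U l" unfolding U_def by auto
    thus ?thesis by blast
  qed
qed

theorem theorem1p6:
  shows "comeager_in malg_topology
           {c \<in> MALG. \<not> (\<exists>A \<in> c. \<exists>D. Delta02 D \<and> measure mu (symdiff A D) = 0)}"
  unfolding comeager_in_def meager_in_def
proof (intro conjI exI[of _ "\<lambda>n. MALG - U (from_nat n)"])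
  show "{c \<in> MALG. \<not> (\<exists>A\<in>c. \<exists>D. Delta02 D \<and> measure mu (symdiff A D) = 0)} \<subseteq> topspace malg_topology"
    by (auto simp: topspace_malg)
  show "\<forall>n. nowhere_dense_in malg_topology (MALG - U (from_nat n))" by (simp add: nowhere_U)
  show "topspace malg_topology - {c \<in> MALG. \<not> (\<exists>A\<in>c. \<exists>D. Delta02 D \<and> measure mu (symdiff A D) = 0)}
    \<subseteq> (\<Union>n. MALG - U (from_nat n))"
  proof
    fix c assume "c \<in> topspace malg_topology - {c \<in> MALG. \<not> (\<exists>A\<in>c. \<exists>D. Delta02 D \<and> measure mu (symdiff A D) = 0)}"
    then obtain A D where cM: "c \<in> MALG" and "A \<in> c" "Delta02 D" "measure mu (symdiff A D) = 0"
      by (auto simp: topspace_malg)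
    then obtain l where "c \<notin> U l" using bad by blast
    hence "c \<in> MALG - U (from_nat (to_nat l))" using cM by simp
    thus "c \<in> (\<Union>n. MALG - U (from_nat n))" by blast
  qed
qed

end
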